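(* Let $R$ be a commutative Noetherian ring of prime characteristic $p$ and $G$ an $x$-torsion-free left $R[x,f]$-module. Then there is an order-reversing bijection $\Delta:\mathcal{A}(G)\to\mathcal{I}(G)$ given by $\Delta(N)=(\operatorname{grann}_{R[x,f]}N)\cap R=(0:_RN)$, whose inverse (also order-reversing) is $\mathfrak{b}\mapsto\operatorname{ann}_G(\mathfrak{b}R[x,f])$.
   Context: $R[x,f]$ is the Frobenius skew polynomial ring: free left $R$-module on $(x^i)_{i\ge0}$, $xr=r^px$; $\mathfrak{b}R[x,f]=\bigoplus_n\mathfrak{b}x^n$. $x$-torsion-free: $xg=0\Rightarrow g=0$. Graded two-sided ideals of $R[x,f]$ are $\bigoplus_n\mathfrak{b}_nx^n$ with $(\mathfrak{b}_n)$ ascending chains of ideals. $\operatorname{ann}_G\mathfrak{B}=\{g:\theta g=0\ \forall\theta\in\mathfrak{B}\}$; $\mathcal{A}(G)$ is the set of special annihilator submodules, i.e. those of the form $\operatorname{ann}_G\mathfrak{B}$ with $\mathfrak{B}$ a graded two-sided ideal. $\operatorname{grann}_{R[x,f]}N$ is the set of $\sum r_ix^i$ with each $r_ix^i$ annihilating $N$. $\mathcal{I}(G)$ is the set of ideals $\mathfrak{b}$ of $R$ for which there is an $R[x,f]$-submodule $N$ of $G$ with $\operatorname{grann}_{R[x,f]}N=\mathfrak{b}R[x,f]$. *)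

theory Defs
  imports "HOL-Computational_Algebra.Polynomial" "HOL-Computational_Algebra.Primes"
begin

definition is_ideal :: "'r::comm_ring_1 set \<Rightarrow> bool" where
  "is_ideal I \<longleftrightarrow> 0 \<in> I \<and> (\<forall>a\<in>I. \<forall>b\<in>I. a + b \<in> I) \<and> (\<forall>r a. a \<in> I \<longrightarrow> r * a \<in> I)"

definition noetherian_ring :: "'r::comm_ring_1 itself \<Rightarrow> bool" where
  "noetherian_ring _ \<longleftrightarrow>
     (\<forall>I :: nat \<Rightarrow> 'r set. (\<forall>n. is_ideal (I n)) \<and> (\<forall>n. I n \<subseteq> I (Suc n))
        \<longrightarrow> (\<exists>m. \<forall>n\<ge>m. I n = I m))"

(* The Frobenius skew polynomial ring R[x,f]: an element sum r_i x^i is represented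
   by the polynomial with coefficients r_i (only the additive structure of 'r poly is used).
   Its multiplication is the skew one: (a x^i)(b x^j) = a b^(p^i) x^(i+j), p = char R. *)
definition skmult :: "'r::comm_ring_1 poly \<Rightarrow> 'r poly \<Rightarrow> 'r poly" where
  "skmult a b = (\<Sum>i\<le>degree a. \<Sum>j\<le>degree b.
       monom (coeff a i * coeff b j ^ (CHAR('r) ^ i)) (i + j))"

definition xvar :: "'r::comm_ring_1 poly" where "xvar = monom 1 1"

definition frob_module :: "('r::comm_ring_1 poly \<Rightarrow> 'g::ab_group_add \<Rightarrow> 'g) \<Rightarrow> bool" where
  "frob_module act \<longleftrightarrow>
     (\<forall>a b g. act (a + b) g = act a g + act b g) \<and>
     (\<forall>a g h. act a (g + h) = act a g + act a h) \<and>
     (\<forall>a b g. act (skmult a b) g = act a (act b g)) \<and>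
     (\<forall>g. act 1 g = g)"

definition x_torsion_free :: "('r::comm_ring_1 poly \<Rightarrow> 'g::ab_group_add \<Rightarrow> 'g) \<Rightarrow> bool" where
  "x_torsion_free act \<longleftrightarrow> (\<forall>g. act xvar g = 0 \<longrightarrow> g = 0)"

definition submodule :: "('r::comm_ring_1 poly \<Rightarrow> 'g::ab_group_add \<Rightarrow> 'g) \<Rightarrow> 'g set \<Rightarrow> bool" where
  "submodule act N \<longleftrightarrow> 0 \<in> N \<and> (\<forall>g\<in>N. \<forall>h\<in>N. g + h \<in> N) \<and> (\<forall>a. \<forall>g\<in>N. act a g \<in> N)"

definition twosided_ideal :: "'r::comm_ring_1 poly set \<Rightarrow> bool" where
  "twosided_ideal B \<longleftrightarrow> 0 \<in> B \<and> (\<forall>a\<in>B. \<forall>b\<in>B. a + b \<in> B) \<and>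
     (\<forall>a\<in>B. \<forall>c. skmult c a \<in> B \<and> skmult a c \<in> B)"

definition graded_ideal :: "'r::comm_ring_1 poly set \<Rightarrow> bool" where
  "graded_ideal B \<longleftrightarrow> twosided_ideal B \<and> (\<forall>a\<in>B. \<forall>n. monom (coeff a n) n \<in> B)"

(* b R[x,f] = direct sum of b x^n *)
definition extideal :: "'r::comm_ring_1 set \<Rightarrow> 'r poly set" where
  "extideal b = {a. \<forall>n. coeff a n \<in> b}"

definition annG :: "('r::comm_ring_1 poly \<Rightarrow> 'g::ab_group_add \<Rightarrow> 'g) \<Rightarrow> 'r poly set \<Rightarrow> 'g set" where
  "annG act B = {g. \<forall>\<theta>\<in>B. act \<theta> g = 0}"

definition grann :: "('r::comm_ring_1 poly \<Rightarrow> 'g::ab_group_add \<Rightarrow> 'g) \<Rightarrow> 'g set \<Rightarrow> 'r poly set" where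
  "grann act N = {a. \<forall>i. \<forall>g\<in>N. act (monom (coeff a i) i) g = 0}"

(* (0 :_R N), R embedded in R[x,f] as degree-0 elements *)
definition annR :: "('r::comm_ring_1 poly \<Rightarrow> 'g::ab_group_add \<Rightarrow> 'g) \<Rightarrow> 'g set \<Rightarrow> 'r set" where
  "annR act N = {r. \<forall>g\<in>N. act [:r:] g = 0}"

definition specAnn :: "('r::comm_ring_1 poly \<Rightarrow> 'g::ab_group_add \<Rightarrow> 'g) \<Rightarrow> 'g set set" where
  "specAnn act = {annG act B | B. graded_ideal B}"

definition idealsI :: "('r::comm_ring_1 poly \<Rightarrow> 'g::ab_group_add \<Rightarrow> 'g) \<Rightarrow> 'r set set" where
  "idealsI act = {b. is_ideal b \<and> (\<exists>N. submodule act N \<and> grann act N = extideal b)}"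

end

theory Submission
  imports Defs
begin

lemma ideal_sum:
  assumes "is_ideal b" "\<And>x. x \<in> A \<Longrightarrow> f x \<in> b"
  shows "sum f A \<in> b"
proof (cases "finite A")
  case True
  then show ?thesis using assms(2)
    by (induction A rule: finite_induct) (use assms(1) in \<open>auto simp: is_ideal_def\<close>)
next
  case False
  then show ?thesis using assms(1) by (simp add: is_ideal_def)
qed

lemma zpow_char[simp]:
  assumes "CHAR('r::comm_ring_1) > 0" shows "(0::'r)^(CHAR('r)^i) = 0"
  using assms by (intro zero_power) simp

lemma skmult_ext:
  fixes a b :: "'r::comm_ring_1 poly"
  assumes "CHAR('r) > 0" "degree a \<le> A" "degree b \<le> B"
  shows "skmult a b = (\<Sum>i\<le>A. \<Sum>j\<le>B. monom (coeff a i * coeff b j ^ (CHAR('r)^i)) (i+j))"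
proof -
  have inner: "(\<Sum>j\<le>B. monom (coeff a i * coeff b j ^ (CHAR('r)^i)) (i+j))
      = (\<Sum>j\<le>degree b. monom (coeff a i * coeff b j ^ (CHAR('r)^i)) (i+j))" for i
    by (rule sum.mono_neutral_right) (use assms in \<open>auto simp: coeff_eq_0\<close>)
  have "(\<Sum>i\<le>A. \<Sum>j\<le>B. monom (coeff a i * coeff b j ^ (CHAR('r)^i)) (i+j))
      = (\<Sum>i\<le>degree a. \<Sum>j\<le>B. monom (coeff a i * coeff b j ^ (CHAR('r)^i)) (i+j))"
    by (rule sum.mono_neutral_right) (use assms in \<open>auto simp: coeff_eq_0\<close>)
  then show ?thesis unfolding skmult_def inner by simp
qed

lemma skmult_monom:
  fixes r s :: "'r::comm_ring_1"
  assumes "CHAR('r) > 0"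
  shows "skmult (monom r i) (monom s j) = monom (r * s ^ (CHAR('r)^i)) (i+j)"
proof -
  have "skmult (monom r i) (monom s j) =
     (\<Sum>i'\<le>i. \<Sum>j'\<le>j. monom (coeff (monom r i) i' * coeff (monom s j) j' ^ (CHAR('r)^i')) (i'+j'))"
    by (rule skmult_ext) (use assms in \<open>auto simp: degree_monom_le\<close>)
  also have "\<dots> = (\<Sum>i'\<le>i. if i' = i then monom (r * s ^ (CHAR('r)^i)) (i+j) else 0)"
  proof (rule sum.cong[OF refl])
    fix i' assume "i' \<in> {..i}"
    have "(\<Sum>j'\<le>j. monom (coeff (monom r i) i' * coeff (monom s j) j' ^ (CHAR('r)^i')) (i'+j'))
       = (\<Sum>j'\<le>j. if j' = j then monom (coeff (monom r i) i' * s ^ (CHAR('r)^i')) (i'+j) else 0)"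
      by (rule sum.cong[OF refl]) (use assms in \<open>auto simp: coeff_monom\<close>)
    also have "\<dots> = monom (coeff (monom r i) i' * s ^ (CHAR('r)^i')) (i'+j)"
      by (simp add: sum.delta')
    finally show "(\<Sum>j'\<le>j. monom (coeff (monom r i) i' * coeff (monom s j) j' ^ (CHAR('r)^i')) (i'+j'))
       = (if i' = i then monom (r * s ^ (CHAR('r)^i)) (i+j) else 0)"
      by (auto simp: coeff_monom)
  qed
  also have "\<dots> = monom (r * s ^ (CHAR('r)^i)) (i+j)" by (simp add: sum.delta')
  finally show ?thesis .
qed

lemma pCons_monom0: "[:r:] = monom r 0" by (simp add: monom_0)

context
  fixes act :: "'r::comm_ring_1 poly \<Rightarrow> 'g::ab_group_add \<Rightarrow> 'g"
  assumes fm: "frob_module act" and ch: "CHAR('r) > 0"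
begin

lemma act_add1: "act (a + b) g = act a g + act b g" using fm by (simp add: frob_module_def)
lemma act_add2: "act a (g + h) = act a g + act a h" using fm by (simp add: frob_module_def)
lemma act_mult: "act (skmult a b) g = act a (act b g)" using fm by (simp add: frob_module_def)
lemma act_one: "act 1 g = g" using fm by (simp add: frob_module_def)

lemma act_zero1[simp]: "act 0 g = 0"
  using act_add1[of 0 0 g] by simp
lemma act_zero2[simp]: "act a 0 = 0"
  using act_add2[of a 0 0] by simp

lemma act_sum: "act (sum f A) g = (\<Sum>x\<in>A. act (f x) g)"
proof (cases "finite A")
  case True then show ?thesis by (induction A rule: finite_induct) (auto simp: act_add1)
qed simp

lemma act_expand: "act \<theta> g = (\<Sum>i\<le>degree \<theta>. act (monom (coeff \<theta> i) i) g)"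
  using act_sum[of "\<lambda>i. monom (coeff \<theta> i) i" "{..degree \<theta>}" g] by (simp add: poly_as_sum_of_monoms)

lemma act_monom: "act (monom r i) g = act [:r:] (act (monom 1 i) g)"
  using skmult_monom[OF ch, of r 0 1 i] act_mult[of "monom r 0" "monom 1 i" g]
  by (simp add: monom_0)

lemma act_const_mult: "act [:r * s:] g = act [:r:] (act [:s:] g)"
  using skmult_monom[OF ch, of r 0 s 0] act_mult[of "monom r 0" "monom s 0" g]
  by (simp add: monom_0)

lemma act_const_add: "act [:r + s:] g = act [:r:] g + act [:s:] g"
  using act_add1[of "[:r:]" "[:s:]" g] by simp

lemma act_commute: "act (monom 1 i) (act [:r:] g) = act [:r ^ (CHAR('r)^i):] (act (monom 1 i) g)"
  using skmult_monom[OF ch, of 1 i r 0] skmult_monom[OF ch, of "r ^ (CHAR('r)^i)" 0 1 i]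
    act_mult[of "monom 1 i" "monom r 0" g] act_mult[of "monom (r ^ (CHAR('r)^i)) 0" "monom 1 i" g]
  by (simp add: monom_0)

lemma act_xpow_Suc: "act (monom 1 (Suc i)) g = act xvar (act (monom 1 i) g)"
  using skmult_monom[OF ch, of 1 1 1 i] act_mult[of "monom 1 1" "monom 1 i" g]
  by (simp add: xvar_def)

lemma torsion_free_pow:
  assumes "x_torsion_free act" "act (monom 1 i) h = 0" shows "h = 0"
  using assms(2)
proof (induction i)
  case 0 then show ?case using act_one by (simp add: one_pCons monom_0)
next
  case (Suc i)
  then show ?case using assms(1) act_xpow_Suc unfolding x_torsion_free_def by metis
qed

lemma key_E:
  assumes tf: "x_torsion_free act" and h: "act (monom r i) g = 0"
  shows "act [:r:] g = 0"
proof -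
  obtain k where k: "CHAR('r)^i = Suc k" using ch
    by (metis gr0_conv_Suc zero_less_power)
  have "act (monom 1 i) (act [:r:] g) = act [:r ^ Suc k:] (act (monom 1 i) g)"
    using act_commute k by simp
  also have "\<dots> = act [:r ^ k:] (act [:r:] (act (monom 1 i) g))"
    using act_const_mult[of "r^k" r] by (simp add: mult.commute)
  also have "\<dots> = act [:r ^ k:] (act (monom r i) g)" by (simp only: act_monom[of r i g])
  also have "\<dots> = 0" using h by simp
  finally show ?thesis using torsion_free_pow[OF tf] by blast
qed

lemma grann_ext:
  assumes tf: "x_torsion_free act" and N: "submodule act N"
  shows "grann act N = extideal (annR act N)"
proof
  show "grann act N \<subseteq> extideal (annR act N)"
  proof
    fix a assume a: "a \<in> grann act N"
    show "a \<in> extideal (annR act N)" unfolding extideal_def annR_def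
    proof (intro CollectI allI ballI)
      fix n g assume "g \<in> N"
      then have "act (monom (coeff a n) n) g = 0" using a by (simp add: grann_def)
      then show "act [:coeff a n:] g = 0" by (rule key_E[OF tf])
    qed
  qed
  show "extideal (annR act N) \<subseteq> grann act N"
  proof
    fix a assume a: "a \<in> extideal (annR act N)"
    show "a \<in> grann act N" unfolding grann_def
    proof (intro CollectI allI ballI)
      fix i g assume g: "g \<in> N"
      have "act (monom 1 i) g \<in> N" using N g by (simp add: submodule_def)
      then show "act (monom (coeff a i) i) g = 0"
        using a act_monom[of "coeff a i" i g] by (simp add: extideal_def annR_def)
    qed
  qed
qed

lemma N_sub_annG_grann: "N \<subseteq> annG act (grann act N)"
proof
  fix g assume g: "g \<in> N"
  show "g \<in> annG act (grann act N)" unfolding annG_def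
  proof (intro CollectI ballI)
    fix \<theta> assume "\<theta> \<in> grann act N"
    then have "act (monom (coeff \<theta> i) i) g = 0" for i using g by (simp add: grann_def)
    then show "act \<theta> g = 0" using act_expand[of \<theta> g] by simp
  qed
qed

lemma annG_submodule:
  assumes "twosided_ideal B" shows "submodule act (annG act B)"
  using assms unfolding submodule_def annG_def twosided_ideal_def
  by (auto simp: act_add2 act_mult[symmetric])

lemma annR_ideal: "is_ideal (annR act N)"
  unfolding is_ideal_def annR_def
  by (auto simp: act_const_add act_const_mult)

end

lemma ideal_pow: "is_ideal b \<Longrightarrow> x \<in> b \<Longrightarrow> n > 0 \<Longrightarrow> x ^ n \<in> b"
proof -
  assume I: "is_ideal b" and x: "x \<in> b" and n: "n > 0"
  then obtain m where "n = Suc m" by (cases n) auto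
  then have "x ^ n = x ^ m * x" by (simp add: mult.commute)
  then show ?thesis using I x by (simp add: is_ideal_def)
qed

lemma term_in: "is_ideal b \<Longrightarrow> y \<in> b \<Longrightarrow> CHAR('r::comm_ring_1) > 0 \<Longrightarrow> (c::'r) * y ^ (CHAR('r)^i) \<in> b"
  using ideal_pow[of b y "CHAR('r)^i"] by (simp add: is_ideal_def)

lemma ideal_mult_r: "is_ideal b \<Longrightarrow> x \<in> b \<Longrightarrow> x * y \<in> b"
  by (metis is_ideal_def mult.commute)

lemma ext_graded:
  fixes b :: "'r::comm_ring_1 set"
  assumes I: "is_ideal b" and ch: "CHAR('r) > 0"
  shows "graded_ideal (extideal b)"
proof -
  have z: "0 \<in> b" using I by (simp add: is_ideal_def)
  have l: "skmult c a \<in> extideal b" if "a \<in> extideal b" for a c :: "'r poly"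
    unfolding skmult_def extideal_def
    using that I z ch
    by (auto simp: coeff_sum extideal_def intro!: ideal_sum[OF I] term_in)
  have r: "skmult a c \<in> extideal b" if "a \<in> extideal b" for a c :: "'r poly"
    unfolding skmult_def extideal_def
    using that I z ch
    by (auto simp: coeff_sum extideal_def intro!: ideal_sum[OF I] ideal_mult_r[OF I])
  have a: "x + y \<in> extideal b" if "x \<in> extideal b" "y \<in> extideal b" for x y :: "'r poly"
    using that I unfolding extideal_def is_ideal_def by simp
  have m: "monom (coeff x n) n \<in> extideal b" if "x \<in> extideal b" for x :: "'r poly" and n
    using that z unfolding extideal_def by (simp add: coeff_monom)
  have z': "0 \<in> extideal b" using z unfolding extideal_def by simp
  show ?thesis
    unfolding graded_ideal_def twosided_ideal_def
    using l r a m z' by blast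
qed

theorem proposition1p11:
  fixes act :: "'r::comm_ring_1 poly \<Rightarrow> 'g::ab_group_add \<Rightarrow> 'g"
    and p :: nat
  assumes "noetherian_ring TYPE('r)"
    and "prime p" and "CHAR('r) = p"
    and "frob_module act"
    and "x_torsion_free act"
  shows "bij_betw (annR act) (specAnn act) (idealsI act)
    \<and> (\<forall>N\<in>specAnn act. annR act N = {r. [:r:] \<in> grann act N})
    \<and> (\<forall>N\<in>specAnn act. annG act (extideal (annR act N)) = N)
    \<and> (\<forall>b\<in>idealsI act. annR act (annG act (extideal b)) = b)
    \<and> (\<forall>b\<in>idealsI act. annG act (extideal b) \<in> specAnn act)
    \<and> (\<forall>N\<in>specAnn act. \<forall>N'\<in>specAnn act. N \<subseteq> N' \<longleftrightarrow> annR act N' \<subseteq> annR act N)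
    \<and> (\<forall>b\<in>idealsI act. \<forall>b'\<in>idealsI act.
         b \<subseteq> b' \<longleftrightarrow> annG act (extideal b') \<subseteq> annG act (extideal b))"
proof -
  have ch: "CHAR('r) > 0" using assms(2,3) prime_gt_0_nat by blast
  note fm = assms(4) and tf = assms(5)
  have act0[simp]: "act 0 g = 0" for g using act_zero1[OF fm ch] .
  have c2: "annR act N = {r. [:r:] \<in> grann act N}" for N
  proof -
    have "act (monom (coeff [:r:] i) i) g = (if i = 0 then act [:r:] g else 0)" for r i g
      by (cases i) (auto simp: monom_0)
    then show ?thesis unfolding annR_def grann_def by auto
  qed
  have c3: "annG act (extideal (annR act N)) = N" if N: "N \<in> specAnn act" for N
  proof -
    obtain B where B: "graded_ideal B" and NB: "N = annG act B"
      using N unfolding specAnn_def by blast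
    have sub: "submodule act N" using annG_submodule[OF fm ch] B NB
      by (simp add: graded_ideal_def)
    show ?thesis
    proof
      show "N \<subseteq> annG act (extideal (annR act N))"
        using N_sub_annG_grann[OF fm ch, of N] grann_ext[OF fm ch tf sub] by simp
      show "annG act (extideal (annR act N)) \<subseteq> N"
      proof
        fix h assume h: "h \<in> annG act (extideal (annR act N))"
        show "h \<in> N" unfolding NB annG_def
        proof (intro CollectI ballI)
          fix \<theta> assume th: "\<theta> \<in> B"
          have "act (monom (coeff \<theta> i) i) h = 0" for i
          proof -
            have mB: "monom (coeff \<theta> i) i \<in> B" using B th by (simp add: graded_ideal_def)
            have "act [:coeff \<theta> i:] g = 0" if "g \<in> N" for g
              using key_E[OF fm ch tf] mB that NB by (auto simp: annG_def)
            then have "coeff \<theta> i \<in> annR act N" by (simp add: annR_def)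
            moreover have "0 \<in> annR act N" using annR_ideal[OF fm ch] by (simp add: is_ideal_def)
            ultimately have "monom (coeff \<theta> i) i \<in> extideal (annR act N)"
              by (simp add: extideal_def coeff_monom)
            then show ?thesis using h by (simp add: annG_def)
          qed
          then show "act \<theta> h = 0" using act_expand[OF fm ch, of \<theta> h] by simp
        qed
      qed
    qed
  qed
  have c4: "annR act (annG act (extideal b)) = b" if b: "b \<in> idealsI act" for b
  proof -
    obtain N' where I: "is_ideal b" and N': "submodule act N'" and g: "grann act N' = extideal b"
      using b unfolding idealsI_def by blast
    have z: "0 \<in> b" using I by (simp add: is_ideal_def)
    have cb: "[:r:] \<in> extideal b \<longleftrightarrow> r \<in> b" for r
      using z unfolding extideal_def by (auto simp: coeff_pCons split: nat.splits)
    show ?thesis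
    proof
      show "b \<subseteq> annR act (annG act (extideal b))"
        using cb by (auto simp: annR_def annG_def)
      show "annR act (annG act (extideal b)) \<subseteq> b"
      proof
        fix r assume r: "r \<in> annR act (annG act (extideal b))"
        have "N' \<subseteq> annG act (extideal b)" using N_sub_annG_grann[OF fm ch, of N'] g by simp
        then have "r \<in> annR act N'" using r by (auto simp: annR_def)
        then have "[:r:] \<in> grann act N'" using c2 by blast
        then show "r \<in> b" using g cb by simp
      qed
    qed
  qed
  have c5: "annG act (extideal b) \<in> specAnn act" if b: "b \<in> idealsI act" for b
  proof -
    have "is_ideal b" using b by (simp add: idealsI_def)
    then show ?thesis using ext_graded[OF _ ch] unfolding specAnn_def by blast
  qed
  have img: "annR act N \<in> idealsI act" if N: "N \<in> specAnn act" for N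
  proof -
    obtain B where B: "graded_ideal B" and NB: "N = annG act B"
      using N unfolding specAnn_def by blast
    have sub: "submodule act N" using annG_submodule[OF fm ch] B NB
      by (simp add: graded_ideal_def)
    show ?thesis unfolding idealsI_def
      using annR_ideal[OF fm ch] sub grann_ext[OF fm ch tf sub] by blast
  qed
  have mono_ext: "b \<subseteq> b' \<Longrightarrow> annG act (extideal b') \<subseteq> annG act (extideal b)" for b b'
    by (auto simp: annG_def extideal_def)
  have mono_R: "N \<subseteq> N' \<Longrightarrow> annR act N' \<subseteq> annR act N" for N N'
    by (auto simp: annR_def)
  have bij: "bij_betw (annR act) (specAnn act) (idealsI act)"
  proof (rule bij_betwI')
    show "(annR act x = annR act y) = (x = y)" if "x \<in> specAnn act" "y \<in> specAnn act" for x y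
      using c3 that by metis
    show "annR act x \<in> idealsI act" if "x \<in> specAnn act" for x using img that .
    show "\<exists>x\<in>specAnn act. y = annR act x" if "y \<in> idealsI act" for y
      using c4 c5 that by metis
  qed
  have o6: "N \<subseteq> N' \<longleftrightarrow> annR act N' \<subseteq> annR act N"
    if "N \<in> specAnn act" "N' \<in> specAnn act" for N N'
  proof
    assume "annR act N' \<subseteq> annR act N"
    then have "annG act (extideal (annR act N)) \<subseteq> annG act (extideal (annR act N'))" by (rule mono_ext)
    then show "N \<subseteq> N'" using c3 that by simp
  qed (rule mono_R)
  have o7: "b \<subseteq> b' \<longleftrightarrow> annG act (extideal b') \<subseteq> annG act (extideal b)"
    if "b \<in> idealsI act" "b' \<in> idealsI act" for b b'
  proof
    assume "annG act (extideal b') \<subseteq> annG act (extideal b)"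
    then have "annR act (annG act (extideal b)) \<subseteq> annR act (annG act (extideal b'))" by (rule mono_R)
    then show "b \<subseteq> b'" using c4 that by simp
  qed (rule mono_ext)
  show ?thesis
  proof (intro conjI ballI)
    show "bij_betw (annR act) (specAnn act) (idealsI act)" by (rule bij)
  next
    fix N show "annR act N = {r. [:r:] \<in> grann act N}" by (rule c2)
  next
    fix N assume "N \<in> specAnn act" then show "annG act (extideal (annR act N)) = N" by (rule c3)
  next
    fix b assume "b \<in> idealsI act" then show "annR act (annG act (extideal b)) = b" by (rule c4)
  next
    fix b assume "b \<in> idealsI act" then show "annG act (extideal b) \<in> specAnn act" by (rule c5)
  next
    fix N N' assume "N \<in> specAnn act" "N' \<in> specAnn act"
    then show "N \<subseteq> N' \<longleftrightarrow> annR act N' \<subseteq> annR act N" by (rule o6)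
  next
    fix b b' assume "b \<in> idealsI act" "b' \<in> idealsI act"
    then show "b \<subseteq> b' \<longleftrightarrow> annG act (extideal b') \<subseteq> annG act (extideal b)" by (rule o7)
  qed
qed

end
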